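(* Consider $N$ material points $(P_i,m_i)$ with Cartesian coordinates $\mathbf X(\mathbf q,t)\in\mathbb R^{3N}$ (smooth, $\mathbf q\in\mathbb R^\ell$), momenta $\mathbf Q=(m_1\dot P_1,\dots,m_N\dot P_N)$, subject to a total force $\mathcal F=\mathcal F_0+\mathcal F_S+\mathcal F_A+\mathcal F_R+\mathcal G$, where: (i) $J_{\mathbf q}^T\mathbf X\,\mathcal F_0=\nabla_{\mathbf q}U_0$ for a smooth $U_0(\mathbf q,t)$; (ii) $J_{\mathbf q}^T\mathbf X\,\mathcal F_S=\mathcal O_s[\mathcal U_S]$ for some $s\ge0$ and smooth $\mathcal U_S(\mathbf q,\dots,\mathbf q^{(s+1)},t)$; (iii) $\mathcal F_A=\mathbb L\mathbf X^{(h+1)}$ for some integer $h\ge1$ and constant diagonal positive matrix $\mathbb L$, with $\mathcal U_A=\frac12\mathbb L\mathbf X^{(h)}\cdot\mathbf X^{(h)}$; (iv) $J_{\mathbf q}^T\mathbf X\,\mathcal F_R=-\nabla_{\mathbf q^{(\sigma)}}\mathcal R$ for some integer $\sigma\ge1$ and smooth $\mathcal R(\mathbf q,\dots,\mathbf q^{(\sigma)},t)$; (v) $\mathcal G=\mathcal G(\mathbf q,\dots,\mathbf q^{(\varrho-1)},t)$ for some integer $\varrho\ge1$, and $\gamma_\varrho=(J_{\mathbf q}^T\mathbf X\,\mathcal G)\cdot\mathbf q^{(\varrho)}$. Let $r=\max(s,h-1,\sigma,\varrho)$, $\mathcal L=\frac12\mathbf Q\cdot\dot{\mathbf X}+U_0$,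 and $$\mathcal Y_r=\frac{d^r\mathcal L}{dt^r}+\frac{d^{r-s}\mathcal U_S}{dt^{r-s}}-\frac1h\frac{d^{r-(h-1)}\mathcal U_A}{dt^{r-(h-1)}}-\frac{d^{r-\sigma}\mathcal R}{dt^{r-\sigma}}+\frac{d^{r-\varrho}\gamma_\varrho}{dt^{r-\varrho}}.$$ Then $\mathcal O_r[\mathcal Y_r]=J_{\mathbf q}^T\mathbf X(\mathcal F-\dot{\mathbf Q})$; in particular the Newton equations projected on the Lagrangian components, $J_{\mathbf q}^T\mathbf X\,\dot{\mathbf Q}=J_{\mathbf q}^T\mathbf X\,\mathcal F$, are equivalent to $$\nabla_{\mathbf q^{(r)}}\mathcal Y_r-(r+1)\frac{d}{dt}\nabla_{\mathbf q^{(r+1)}}\mathcal Y_r=0.$$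
   Context: $\mathbf q^{(h)}$ denotes the $h$-th time derivative (with $\mathbf q^{(0)}=\mathbf q$), treated as independent variables; $\mathbf X^{(h)}$ is the $h$-th total time derivative of $\mathbf X(\mathbf q(t),t)$ expressed as a function of $\mathbf q,\dots,\mathbf q^{(h)},t$. For $F(\mathbf q,\dots,\mathbf q^{(k)},t)$, $\frac{dF}{dt}=\partial_tF+\sum_{j=0}^k\nabla_{\mathbf q^{(j)}}F\cdot\mathbf q^{(j+1)}$ is the total time derivative. For $\mathbf w\in\mathbb R^{3N}$, $J_{\mathbf q}^T\mathbf X\,\mathbf w$ is the $\ell$-vector with components $\mathbf w\cdot\partial\mathbf X/\partial q_k$ (Lagrangian components). For $r\ge0$ and $\mathcal Y_r$ depending on $\mathbf q,\dots,\mathbf q^{(r+1)},t$, $\mathcal O_r[\mathcal Y_r]=\nabla_{\mathbf q^{(r)}}\mathcal Y_r-(r+1)\frac{d}{dt}\nabla_{\mathbf q^{(r+1)}}\mathcal Y_r$. *)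

theory Defs
  imports "HOL-Analysis.Analysis"
begin

text \<open>A point of the (infinite) jet space is a pair (z, t) where
  z j :: real^'l is the value of the independent variable q^(j) (z 0 = q) and t is time.
  A jet function is a function on this space that depends only on finitely many
  of the q^(j) (see depends_upto).\<close>

type_synonym 'l jet = "(nat \<Rightarrow> real^'l) \<times> real"

text \<open>Coordinates of the jet space: time, or the k-th component of q^(j).\<close>
datatype 'l jcoord = TC | QC nat 'l

definition depends_upto :: "nat \<Rightarrow> ('l jet \<Rightarrow> 'b) \<Rightarrow> bool" where
  "depends_upto k F \<longleftrightarrow> (\<forall>z z' t. (\<forall>j\<le>k. z j = z' j) \<longrightarrow> F (z, t) = F (z', t))"

definition jet_order :: "('l jet \<Rightarrow> 'b) \<Rightarrow> nat" where
  "jet_order F = (LEAST k. depends_upto k F)"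

definition jshift :: "('l::finite) jcoord \<Rightarrow> real \<Rightarrow> 'l jet \<Rightarrow> 'l jet" where
  "jshift c x p = (case c of
      TC \<Rightarrow> (fst p, snd p + x)
    | QC j k \<Rightarrow> ((fst p)(j := fst p j + x *\<^sub>R axis k 1), snd p))"

definition pdc :: "('l::finite) jcoord \<Rightarrow> ('l jet \<Rightarrow> real) \<Rightarrow> 'l jet \<Rightarrow> real" where
  "pdc c F p = deriv (\<lambda>x. F (jshift c x p)) 0"

definition pdcE :: "('l::finite) jcoord \<Rightarrow> ('l jet \<Rightarrow> 'b::euclidean_space) \<Rightarrow> 'l jet \<Rightarrow> 'b" where
  "pdcE c F p = (\<Sum>b\<in>Basis. pdc c (\<lambda>p'. F p' \<bullet> b) p *\<^sub>R b)"

definition gradq :: "nat \<Rightarrow> (('l::finite) jet \<Rightarrow> real) \<Rightarrow> 'l jet \<Rightarrow> real^'l" where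
  "gradq j F p = (\<chi> k. pdc (QC j k) F p)"

definition pd_list :: "('l::finite) jcoord list \<Rightarrow> ('l jet \<Rightarrow> real) \<Rightarrow> 'l jet \<Rightarrow> real" where
  "pd_list cs F = foldr pdc cs F"

definition smooth_jet :: "(('l::finite) jet \<Rightarrow> real) \<Rightarrow> bool" where
  "smooth_jet F \<longleftrightarrow> (\<forall>cs. continuous_on UNIV (pd_list cs F) \<and>
      (\<forall>c p. (\<lambda>x. pd_list cs F (jshift c x p)) differentiable (at 0)))"

definition tdiff :: "(('l::finite) jet \<Rightarrow> real) \<Rightarrow> 'l jet \<Rightarrow> real" where
  "tdiff F p = pdc TC F p + (\<Sum>j\<le>jet_order F. gradq j F p \<bullet> fst p (Suc j))"

definition tdiffE :: "(('l::finite) jet \<Rightarrow> 'b::euclidean_space) \<Rightarrow> 'l jet \<Rightarrow> 'b" where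
  "tdiffE F p = (\<Sum>b\<in>Basis. tdiff (\<lambda>p'. F p' \<bullet> b) p *\<^sub>R b)"

definition Oop :: "nat \<Rightarrow> (('l::finite) jet \<Rightarrow> real) \<Rightarrow> 'l jet \<Rightarrow> real^'l" where
  "Oop r Y p = gradq r Y p - real (r + 1) *\<^sub>R tdiffE (gradq (Suc r) Y) p"

definition JT :: "(('l::finite) jet \<Rightarrow> 'b::euclidean_space) \<Rightarrow> 'l jet \<Rightarrow> 'b \<Rightarrow> real^'l" where
  "JT X p w = (\<chi> k. w \<bullet> pdcE (QC 0 k) X p)"

end

theory Submission
  imports Defs
begin

lemma jshift_0[simp]: "jshift c 0 p = p"
  by (simp add: jshift_def split: jcoord.split)

lemma jshift_add: "jshift c x (jshift c y p) = jshift c (x + y) p"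
  by (auto simp: jshift_def fun_eq_iff algebra_simps split: jcoord.split)

lemma jshift_comm: "jshift c x (jshift c' y p) = jshift c' y (jshift c x p)"
  by (auto simp: jshift_def fun_eq_iff algebra_simps split: jcoord.split)

lemma snd_jshift_QC[simp]: "snd (jshift (QC j k) x p) = snd p"
  by (simp add: jshift_def)

lemma fst_jshift: "fst (jshift c x p) i = fst p i + (case c of TC \<Rightarrow> 0 | QC j k \<Rightarrow> if i = j then x *\<^sub>R axis k 1 else 0)"
  by (auto simp: jshift_def split: jcoord.split)

lemma snd_jshift: "snd (jshift c x p) = snd p + (case c of TC \<Rightarrow> x | QC j k \<Rightarrow> 0)"
  by (auto simp: jshift_def split: jcoord.split)

definition Dc :: "('l::finite) jcoord \<Rightarrow> ('l jet \<Rightarrow> real) \<Rightarrow> 'l jet \<Rightarrow> bool" where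
  "Dc c F p \<longleftrightarrow> (\<lambda>x. F (jshift c x p)) differentiable (at 0)"

lemma Dc_deriv: "Dc c F p \<Longrightarrow> ((\<lambda>x. F (jshift c x p)) has_real_derivative pdc c F p) (at 0)"
  unfolding Dc_def pdc_def by (simp add: DERIV_deriv_iff_real_differentiable)

lemma Dc_deriv_at:
  assumes "Dc c F (jshift c x0 p)"
  shows "((\<lambda>x. F (jshift c x p)) has_real_derivative pdc c F (jshift c x0 p)) (at x0)"
proof -
  have "((\<lambda>u. F (jshift c u (jshift c x0 p))) has_real_derivative pdc c F (jshift c x0 p)) (at 0)"
    using Dc_deriv[OF assms] .
  then have "((\<lambda>u. F (jshift c (u + x0) p)) has_real_derivative pdc c F (jshift c x0 p)) (at 0)"
    by (simp add: jshift_add)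
  then show ?thesis using DERIV_shift[of "\<lambda>x. F (jshift c x p)" _ 0 x0] by simp
qed

lemma pdc_eqI: "((\<lambda>x. F (jshift c x p)) has_real_derivative d) (at 0) \<Longrightarrow> pdc c F p = d"
  unfolding pdc_def by (rule DERIV_imp_deriv)

lemma pdc_add: "Dc c F p \<Longrightarrow> Dc c G p \<Longrightarrow> pdc c (\<lambda>q. F q + G q) p = pdc c F p + pdc c G p"
  by (rule pdc_eqI) (intro derivative_intros Dc_deriv)

lemma pdc_diff: "Dc c F p \<Longrightarrow> Dc c G p \<Longrightarrow> pdc c (\<lambda>q. F q - G q) p = pdc c F p - pdc c G p"
  by (rule pdc_eqI) (intro derivative_intros Dc_deriv)

lemma pdc_mult: "Dc c F p \<Longrightarrow> Dc c G p \<Longrightarrow> pdc c (\<lambda>q. F q * G q) p = pdc c F p * G p + F p * pdc c G p"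
proof -
  assume a: "Dc c F p" "Dc c G p"
  have "((\<lambda>x. F (jshift c x p) * G (jshift c x p)) has_real_derivative
     pdc c F p * G (jshift c 0 p) + pdc c G p * F (jshift c 0 p)) (at 0)"
    by (rule DERIV_mult[OF Dc_deriv[OF a(1)] Dc_deriv[OF a(2)]])
  then show ?thesis by (intro pdc_eqI) (simp add: algebra_simps)
qed

lemma pdc_cmult: "Dc c F p \<Longrightarrow> pdc c (\<lambda>q. a * F q) p = a * pdc c F p"
  by (rule pdc_eqI) (rule DERIV_cmult[OF Dc_deriv])

lemma pdc_const[simp]: "pdc c (\<lambda>q. a) p = 0"
  by (rule pdc_eqI) simp

lemma pdc_sum: "(\<And>i. i \<in> A \<Longrightarrow> Dc c (f i) p) \<Longrightarrow> pdc c (\<lambda>q. \<Sum>i\<in>A. f i q) p = (\<Sum>i\<in>A. pdc c (f i) p)"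
  by (rule pdc_eqI) (rule DERIV_sum, rule Dc_deriv, simp)

lemma Dc_add: "Dc c F p \<Longrightarrow> Dc c G p \<Longrightarrow> Dc c (\<lambda>q. F q + G q) p"
  unfolding Dc_def by (intro derivative_intros)
lemma Dc_diff: "Dc c F p \<Longrightarrow> Dc c G p \<Longrightarrow> Dc c (\<lambda>q. F q - G q) p"
  unfolding Dc_def by (intro derivative_intros)
lemma Dc_mult: "Dc c F p \<Longrightarrow> Dc c G p \<Longrightarrow> Dc c (\<lambda>q. F q * G q) p"
  unfolding Dc_def by (intro derivative_intros)
lemma Dc_const: "Dc c (\<lambda>q. a) p"
  unfolding Dc_def by (intro derivative_intros)
lemma Dc_sum: "finite A \<Longrightarrow> (\<And>i. i \<in> A \<Longrightarrow> Dc c (f i) p) \<Longrightarrow> Dc c (\<lambda>q. \<Sum>i\<in>A. f i q) p"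
  unfolding Dc_def by (rule differentiable_sum) auto

lemma coord_shift: "fst (jshift c x p) j $ k = fst p j $ k + (case c of TC \<Rightarrow> 0 | QC j' k' \<Rightarrow> if j = j' \<and> k = k' then x else 0)"
  by (auto simp: fst_jshift axis_def split: jcoord.split)

lemma coord_deriv: "((\<lambda>x. fst (jshift c x p) j $ k) has_real_derivative
   (case c of TC \<Rightarrow> 0 | QC j' k' \<Rightarrow> if j = j' \<and> k = k' then 1 else 0)) (at x0)"
  unfolding coord_shift by (cases c) (auto intro!: derivative_eq_intros)

lemma Dc_coord: "Dc c (\<lambda>q. fst q j $ k) p"
  unfolding Dc_def using coord_deriv real_differentiable_def by blast

lemma pdc_coord: "pdc c (\<lambda>q. fst q j $ k) p = (case c of TC \<Rightarrow> 0 | QC j' k' \<Rightarrow> if j = j' \<and> k = k' then 1 else 0)"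
  by (rule pdc_eqI) (rule coord_deriv)

lemma cont_coord: "continuous_on UNIV (\<lambda>q::'l::finite jet. fst q j $ k)"
  by (intro continuous_on_component continuous_on_compose2[OF continuous_on_product_coordinates continuous_on_fst]) auto

lemma cont_if_const[continuous_intros]: "continuous_on S f \<Longrightarrow> continuous_on S g \<Longrightarrow> continuous_on S (\<lambda>x. if P then f x else g x)"
  by (cases P) auto

lemma cont_jshift2: "continuous_on UNIV (\<lambda>u::real\<times>real. jshift c2 (snd u) (jshift c1 (fst u) p))"
proof -
  have f: "continuous_on UNIV (\<lambda>u::real\<times>real. fst (jshift c2 (snd u) (jshift c1 (fst u) p)))"
    apply (rule continuous_on_coordinatewise_then_product)
    apply (simp add: fst_jshift)
    apply (cases c1; cases c2; auto intro!: continuous_intros)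
    done
  have s: "continuous_on UNIV (\<lambda>u::real\<times>real. snd (jshift c2 (snd u) (jshift c1 (fst u) p)))"
    by (simp add: snd_jshift) (cases c1; cases c2; auto intro!: continuous_intros)
  have "continuous_on UNIV (\<lambda>u::real\<times>real. (fst (jshift c2 (snd u) (jshift c1 (fst u) p)), snd (jshift c2 (snd u) (jshift c1 (fst u) p))))"
    by (intro continuous_on_Pair f s)
  then show ?thesis by simp
qed

definition okf :: "(('l::finite) jet \<Rightarrow> real) \<Rightarrow> bool" where
  "okf F \<longleftrightarrow> continuous_on UNIV F \<and> (\<forall>c p. Dc c F p)"

lemma smooth_iff: "smooth_jet F \<longleftrightarrow> (\<forall>cs. okf (pd_list cs F))"
  unfolding smooth_jet_def okf_def Dc_def by blast

lemma pd_list_Nil[simp]: "pd_list [] F = F" by (simp add: pd_list_def)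
lemma pd_list_Cons[simp]: "pd_list (c # cs) F = pdc c (pd_list cs F)" by (simp add: pd_list_def)
lemma pd_list_snoc: "pd_list (cs @ [c]) F = pd_list cs (pdc c F)" by (simp add: pd_list_def)

lemma pd_list_add:
  fixes F G :: "('l::finite) jet \<Rightarrow> real" and cs :: "'l jcoord list"
  shows "(\<And>cs'. length cs' < length cs \<Longrightarrow> okf (pd_list cs' F) \<and> okf (pd_list cs' G)) \<Longrightarrow>
   pd_list cs (\<lambda>q. F q + G q) = (\<lambda>q. pd_list cs F q + pd_list cs G q)"
proof (induction cs)
  case Nil then show ?case by simp
next
  case (Cons c cs)
  have ih: "pd_list cs (\<lambda>q. F q + G q) = (\<lambda>q. pd_list cs F q + pd_list cs G q)"
    using Cons by force
  have "okf (pd_list cs F)" "okf (pd_list cs G)" using Cons.prems[of cs] by auto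
  then show ?case by (simp add: ih fun_eq_iff okf_def pdc_add)
qed

lemma okf_add: "okf F \<Longrightarrow> okf G \<Longrightarrow> okf (\<lambda>q. F q + G q)"
  unfolding okf_def by (auto intro: continuous_intros Dc_add)

lemma okf_mult: "okf F \<Longrightarrow> okf G \<Longrightarrow> okf (\<lambda>q. F q * G q)"
  unfolding okf_def by (auto intro: continuous_intros Dc_mult)

lemma smooth_add: "smooth_jet F \<Longrightarrow> smooth_jet G \<Longrightarrow> smooth_jet (\<lambda>q. F q + G q)"
  unfolding smooth_iff by (simp add: pd_list_add okf_add)

lemma smooth_pdc: "smooth_jet F \<Longrightarrow> smooth_jet (pdc c F)"
  unfolding smooth_iff by (metis pd_list_snoc)

lemma smooth_okf: "smooth_jet F \<Longrightarrow> okf F"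
  unfolding smooth_iff by (metis pd_list_Nil)

lemma smooth_Dc: "smooth_jet F \<Longrightarrow> Dc c F p"
  using smooth_okf okf_def by blast

lemma smooth_cont: "smooth_jet F \<Longrightarrow> continuous_on UNIV F"
  using smooth_okf okf_def by blast

lemma prod_aux: "\<forall>(F::('l::finite) jet \<Rightarrow> real) G (cs::'l jcoord list). smooth_jet F \<and> smooth_jet G \<and> length cs \<le> n \<longrightarrow> okf (pd_list cs (\<lambda>q. F q * G q))"
proof (induction n)
  case 0 then show ?case by (auto intro: okf_mult smooth_okf)
next
  case (Suc n)
  show ?case
  proof (intro allI impI)
    fix F G :: "'l jet \<Rightarrow> real" and cs :: "'l jcoord list"
    assume a: "smooth_jet F \<and> smooth_jet G \<and> length cs \<le> Suc n"
    show "okf (pd_list cs (\<lambda>q. F q * G q))"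
    proof (cases "length cs \<le> n")
      case True then show ?thesis using Suc a by blast
    next
      case False
      then obtain cs' c where cs: "cs = cs' @ [c]" by (metis le0 list.size(3) rev_exhaust)
      with False a have len: "length cs' = n" by auto
      define A where "A = (\<lambda>q. pdc c F q * G q)"
      define B where "B = (\<lambda>q. F q * pdc c G q)"
      have sm: "smooth_jet (pdc c F)" "smooth_jet (pdc c G)" using a smooth_pdc by auto
      have e: "pdc c (\<lambda>q. F q * G q) = (\<lambda>q. A q + B q)"
        using a by (auto simp: fun_eq_iff A_def B_def pdc_mult smooth_Dc)
      have okA: "\<And>cs''. length cs'' \<le> n \<Longrightarrow> okf (pd_list cs'' A)"
        using Suc sm a unfolding A_def by blast
      have okB: "\<And>cs''. length cs'' \<le> n \<Longrightarrow> okf (pd_list cs'' B)"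
        using Suc sm a unfolding B_def by blast
      have "pd_list cs (\<lambda>q. F q * G q) = (\<lambda>q. pd_list cs' A q + pd_list cs' B q)"
        unfolding cs pd_list_snoc e
        by (rule pd_list_add) (use okA okB len in auto)
      then show ?thesis using okA okB len okf_add by auto
    qed
  qed
qed

lemma smooth_mult: "smooth_jet F \<Longrightarrow> smooth_jet G \<Longrightarrow> smooth_jet (\<lambda>q. F q * G q)"
  unfolding smooth_iff[of "\<lambda>q. F q * G q"] using prod_aux by blast

lemma pd_list_const: "pd_list cs (\<lambda>q. a) = (\<lambda>q. if cs = [] then a else 0)"
  by (induction cs) simp_all

lemma smooth_const: "smooth_jet (\<lambda>q. a)"
  unfolding smooth_iff okf_def pd_list_const by (auto intro: Dc_const)

lemma smooth_coord: "smooth_jet (\<lambda>q. fst q j $ k)"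
  unfolding smooth_iff
proof
  fix cs :: "'a jcoord list"
  show "okf (pd_list cs (\<lambda>q. fst q j $ k))"
  proof (cases cs rule: rev_exhaust)
    case Nil then show ?thesis by (simp add: okf_def cont_coord Dc_coord)
  next
    case (snoc cs' c)
    have "pdc c (\<lambda>q. fst q j $ k) = (\<lambda>q. case c of TC \<Rightarrow> 0 | QC j' k' \<Rightarrow> if j = j' \<and> k = k' then 1 else 0)"
      by (simp add: fun_eq_iff pdc_coord)
    then show ?thesis using smooth_const[unfolded smooth_iff] by (metis pd_list_snoc snoc)
  qed
qed

lemma smooth_cmult: "smooth_jet F \<Longrightarrow> smooth_jet (\<lambda>q. a * F q)"
  using smooth_mult[OF smooth_const] by blast

lemma smooth_diff: "smooth_jet F \<Longrightarrow> smooth_jet G \<Longrightarrow> smooth_jet (\<lambda>q. F q - G q)"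
  using smooth_add[OF _ smooth_cmult[of G "-1"], of F] by simp

lemma smooth_sum: "finite A \<Longrightarrow> (\<And>i. i \<in> A \<Longrightarrow> smooth_jet (f i)) \<Longrightarrow> smooth_jet (\<lambda>q. \<Sum>i\<in>A. f i q)"
proof (induction A rule: finite_induct)
  case empty then show ?case using smooth_const by simp
next
  case (insert x F) then show ?case using smooth_add[of "f x" "\<lambda>q. \<Sum>i\<in>F. f i q"] by simp
qed

lemma mvt2d:
  assumes sm: "smooth_jet F" and h: "h > 0" and k: "k > 0"
  shows "\<exists>\<xi> \<eta>. 0 < \<xi> \<and> \<xi> < h \<and> 0 < \<eta> \<and> \<eta> < k \<and>
     F (jshift a h (jshift b k p)) - F (jshift a h p) - F (jshift b k p) + F p
       = h * k * pdc b (pdc a F) (jshift b \<eta> (jshift a \<xi> p))"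
proof -
  define \<Phi> where "\<Phi> x = F (jshift a x (jshift b k p)) - F (jshift a x p)" for x
  have "\<And>x. (\<Phi> has_real_derivative (pdc a F (jshift a x (jshift b k p)) - pdc a F (jshift a x p))) (at x)"
    unfolding \<Phi>_def by (intro DERIV_diff Dc_deriv_at smooth_Dc[OF sm])
  from MVT2[OF h this] obtain \<xi> where xi: "0 < \<xi>" "\<xi> < h"
    and e1: "\<Phi> h - \<Phi> 0 = (h - 0) * (pdc a F (jshift a \<xi> (jshift b k p)) - pdc a F (jshift a \<xi> p))"
    by blast
  define \<Psi> where "\<Psi> y = pdc a F (jshift b y (jshift a \<xi> p))" for y
  have "\<And>y. (\<Psi> has_real_derivative pdc b (pdc a F) (jshift b y (jshift a \<xi> p))) (at y)"
    unfolding \<Psi>_def by (intro Dc_deriv_at smooth_Dc smooth_pdc[OF sm])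
  from MVT2[OF k this] obtain \<eta> where eta: "0 < \<eta>" "\<eta> < k"
    and e2: "\<Psi> k - \<Psi> 0 = (k - 0) * pdc b (pdc a F) (jshift b \<eta> (jshift a \<xi> p))"
    by blast
  have "F (jshift a h (jshift b k p)) - F (jshift a h p) - F (jshift b k p) + F p = \<Phi> h - \<Phi> 0"
    by (simp add: \<Phi>_def)
  also have "\<dots> = h * (\<Psi> k - \<Psi> 0)"
    using e1 by (simp add: \<Psi>_def jshift_comm[of a \<xi> b k])
  also have "\<dots> = h * k * pdc b (pdc a F) (jshift b \<eta> (jshift a \<xi> p))"
    using e2 by simp
  finally show ?thesis using xi eta by blast
qed

lemma dist_pair_le: "dist (x::real, y::real) (0, 0) \<le> \<bar>x\<bar> + \<bar>y\<bar>"
  by (simp add: dist_Pair_Pair dist_real_def sqrt_sum_squares_le_sum_abs)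

lemma schwarz:
  assumes sm: "smooth_jet F"
  shows "pdc a (pdc b F) p = pdc b (pdc a F) p"
proof (rule ccontr)
  define P where "P = pdc a (pdc b F)"
  define Q where "Q = pdc b (pdc a F)"
  define \<phi> where "\<phi> u = jshift b (snd u) (jshift a (fst u) p)" for u :: "real \<times> real"
  assume ne: "pdc a (pdc b F) p \<noteq> pdc b (pdc a F) p"
  define e where "e = \<bar>P p - Q p\<bar>"
  have e: "e > 0" using ne by (simp add: e_def P_def Q_def)
  have cP: "continuous_on UNIV (\<lambda>u. P (\<phi> u))"
    unfolding \<phi>_def P_def
    by (rule continuous_on_compose2[OF smooth_cont[OF smooth_pdc[OF smooth_pdc[OF sm]]] cont_jshift2]) auto
  have cQ: "continuous_on UNIV (\<lambda>u. Q (\<phi> u))"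
    unfolding \<phi>_def Q_def
    by (rule continuous_on_compose2[OF smooth_cont[OF smooth_pdc[OF smooth_pdc[OF sm]]] cont_jshift2]) auto
  have p0: "\<phi> (0, 0) = p" by (simp add: \<phi>_def)
  obtain d1 where d1: "d1 > 0" "\<And>u. dist u (0,0) < d1 \<Longrightarrow> dist (P (\<phi> u)) (P p) < e/2"
    using cP e unfolding continuous_on_iff p0[symmetric] by (metis UNIV_I half_gt_zero)
  obtain d2 where d2: "d2 > 0" "\<And>u. dist u (0,0) < d2 \<Longrightarrow> dist (Q (\<phi> u)) (Q p) < e/2"
    using cQ e unfolding continuous_on_iff p0[symmetric] by (metis UNIV_I half_gt_zero)
  define h where "h = min d1 d2 / 3"
  have h: "h > 0" using d1 d2 by (simp add: h_def)
  have hd: "3*h \<le> d1" "3*h \<le> d2" by (simp_all add: h_def)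
  obtain \<xi> \<eta> where xe: "0 < \<xi>" "\<xi> < h" "0 < \<eta>" "\<eta> < h"
    and E1: "F (jshift a h (jshift b h p)) - F (jshift a h p) - F (jshift b h p) + F p
       = h * h * Q (jshift b \<eta> (jshift a \<xi> p))"
    using mvt2d[OF sm h h, of a b p] unfolding Q_def by blast
  obtain \<xi>' \<eta>' where xe': "0 < \<xi>'" "\<xi>' < h" "0 < \<eta>'" "\<eta>' < h"
    and E2: "F (jshift b h (jshift a h p)) - F (jshift b h p) - F (jshift a h p) + F p
       = h * h * P (jshift a \<eta>' (jshift b \<xi>' p))"
    using mvt2d[OF sm h h, of b a p] unfolding P_def by blast
  have "h * h * Q (\<phi> (\<xi>, \<eta>)) = h * h * P (\<phi> (\<eta>', \<xi>'))"
  proof -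
    have "jshift b h (jshift a h p) = jshift a h (jshift b h p)" by (rule jshift_comm)
    moreover have "jshift a \<eta>' (jshift b \<xi>' p) = \<phi> (\<eta>', \<xi>')" by (simp add: \<phi>_def jshift_comm)
    moreover have "jshift b \<eta> (jshift a \<xi> p) = \<phi> (\<xi>, \<eta>)" by (simp add: \<phi>_def)
    ultimately show ?thesis using E1 E2 by (metis add_diff_cancel add_diff_eq diff_diff_eq2 diff_add_eq diff_diff_eq)
  qed
  then have eq: "Q (\<phi> (\<xi>, \<eta>)) = P (\<phi> (\<eta>', \<xi>'))" using h by simp
  have "dist (\<xi>, \<eta>) (0,0) < d2"
    using dist_pair_le[of \<xi> \<eta>] xe hd by linarith
  then have A: "dist (Q (\<phi> (\<xi>, \<eta>))) (Q p) < e/2" by (rule d2(2))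
  have "dist (\<eta>', \<xi>') (0,0) < d1"
    using dist_pair_le[of \<eta>' \<xi>'] xe' hd by linarith
  then have B: "dist (P (\<phi> (\<eta>', \<xi>'))) (P p) < e/2" by (rule d1(2))
  from A B eq have "\<bar>P p - Q p\<bar> < e" unfolding dist_real_def by (simp only: abs_less_iff) linarith
  then show False by (simp add: e_def)
qed

lemma dep_mono: "depends_upto K F \<Longrightarrow> K \<le> K' \<Longrightarrow> depends_upto K' F"
  unfolding depends_upto_def by auto

lemma dep_const: "depends_upto K (\<lambda>q. a)"
  unfolding depends_upto_def by auto

lemma dep_coord: "j \<le> K \<Longrightarrow> depends_upto K (\<lambda>q. fst q j $ k)"
  unfolding depends_upto_def by auto

lemma dep_comp2:
  fixes F :: "'l jet \<Rightarrow> 'b" and G :: "'l jet \<Rightarrow> 'c"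
  assumes "depends_upto K F" "depends_upto K G"
  shows "depends_upto K (\<lambda>q. f (F q) (G q))"
  unfolding depends_upto_def
proof (intro allI impI)
  fix z z' :: "nat \<Rightarrow> (real, 'l) vec" and t :: real assume "\<forall>j\<le>K. z j = z' j"
  then have "F (z,t) = F (z',t)" "G (z,t) = G (z',t)" using assms unfolding depends_upto_def by blast+
  then show "f (F (z,t)) (G (z,t)) = f (F (z',t)) (G (z',t))" by simp
qed

lemma dep_add: "depends_upto K F \<Longrightarrow> depends_upto K G \<Longrightarrow> depends_upto K (\<lambda>q. F q + G q)"
  using dep_comp2[of K F G "(+)"] by simp
lemma dep_diff: "depends_upto K F \<Longrightarrow> depends_upto K G \<Longrightarrow> depends_upto K (\<lambda>q. F q - G q)"
  using dep_comp2[of K F G "(-)"] by simp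
lemma dep_mult: "depends_upto K F \<Longrightarrow> depends_upto K G \<Longrightarrow> depends_upto K (\<lambda>q. F q * G q)"
  using dep_comp2[of K F G "(*)"] by simp
lemma dep_cmult: "depends_upto K F \<Longrightarrow> depends_upto K (\<lambda>q. a * F q)"
  using dep_comp2[OF dep_const, of K F "(*)" a] by simp

lemma dep_sum:
  fixes f :: "'i \<Rightarrow> 'l jet \<Rightarrow> real"
  assumes "\<And>i. i \<in> A \<Longrightarrow> depends_upto K (f i)"
  shows "depends_upto K (\<lambda>q. \<Sum>i\<in>A. f i q)"
  unfolding depends_upto_def
proof (intro allI impI)
  fix z z' :: "nat \<Rightarrow> (real, 'l) vec" and t :: real assume h: "\<forall>j\<le>K. z j = z' j"
  have "\<And>i. i \<in> A \<Longrightarrow> f i (z,t) = f i (z',t)" using assms h unfolding depends_upto_def by blast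
  then show "(\<Sum>i\<in>A. f i (z,t)) = (\<Sum>i\<in>A. f i (z',t))" by (rule sum.cong[OF refl])
qed

lemma dep_app:
  assumes "depends_upto K F" "\<forall>j\<le>K. fst A j = fst B j" "snd A = snd B"
  shows "F A = F B"
proof -
  obtain a1 a2 where A: "A = (a1, a2)" by (cases A)
  obtain b1 b2 where B: "B = (b1, b2)" by (cases B)
  have "F (a1, a2) = F (b1, a2)" using assms(1,2) unfolding depends_upto_def A B by simp
  then show ?thesis using assms(3) A B by simp
qed

lemma dep_shift:
  assumes "depends_upto K F" "\<forall>j\<le>K. z j = z' j"
  shows "F (jshift c x (z, t)) = F (jshift c x (z', t))"
  by (rule dep_app[OF assms(1)]) (use assms(2) in \<open>simp_all add: fst_jshift snd_jshift\<close>)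

lemma dep_pdc:
  assumes "depends_upto K F" shows "depends_upto K (pdc c F)"
  unfolding depends_upto_def pdc_def
proof (intro allI impI)
  fix z z' :: "nat \<Rightarrow> real^'a" and t :: real assume "\<forall>j\<le>K. z j = z' j"
  then have "(\<lambda>x. F (jshift c x (z, t))) = (\<lambda>x. F (jshift c x (z', t)))"
    using dep_shift[OF assms] by blast
  then show "deriv (\<lambda>x. F (jshift c x (z, t))) 0 = deriv (\<lambda>x. F (jshift c x (z', t))) 0" by simp
qed

lemma pdc_zero:
  assumes "depends_upto K F" "K < j"
  shows "pdc (QC j k) F p = 0"
proof -
  have "\<And>x. F (jshift (QC j k) x p) = F p"
    by (rule dep_app[OF assms(1)]) (use assms(2) in \<open>simp_all add: fst_jshift\<close>)
  then show ?thesis unfolding pdc_def by simp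
qed

lemma pdc_zero_fun: "depends_upto K F \<Longrightarrow> K < j \<Longrightarrow> pdc (QC j k) F = (\<lambda>q. 0)"
  by (rule ext) (rule pdc_zero)

lemma jet_order_le: "depends_upto K F \<Longrightarrow> jet_order F \<le> K"
  unfolding jet_order_def by (rule Least_le)

lemma dep_jet_order: "depends_upto K F \<Longrightarrow> depends_upto (jet_order F) F"
  unfolding jet_order_def by (rule LeastI)

lemma gradq_zero: "depends_upto K F \<Longrightarrow> K < j \<Longrightarrow> gradq j F p = 0"
  unfolding gradq_def by (simp add: vec_eq_iff pdc_zero)

lemma tdiff_bound:
  assumes "depends_upto K F"
  shows "tdiff F p = pdc TC F p + (\<Sum>j\<le>K. gradq j F p \<bullet> fst p (Suc j))"
proof -
  have le: "jet_order F \<le> K" using jet_order_le[OF assms] .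
  have d: "depends_upto (jet_order F) F" using dep_jet_order[OF assms] .
  have "(\<Sum>j\<le>K. gradq j F p \<bullet> fst p (Suc j)) = (\<Sum>j\<le>jet_order F. gradq j F p \<bullet> fst p (Suc j))"
  proof (rule sum.mono_neutral_right)
    show "finite {..K}" by simp
    show "{..jet_order F} \<subseteq> {..K}" using le by auto
    show "\<forall>i\<in>{..K} - {..jet_order F}. gradq i F p \<bullet> fst p (Suc i) = 0"
      using gradq_zero[OF d] by simp
  qed
  then show ?thesis by (simp add: tdiff_def)
qed

lemma tdiff_expand:
  assumes "depends_upto K F"
  shows "tdiff F = (\<lambda>p. pdc TC F p + (\<Sum>j\<le>K. \<Sum>k\<in>UNIV. pdc (QC j k) F p * fst p (Suc j) $ k))"
  by (rule ext) (simp add: tdiff_bound[OF assms] inner_vec_def gradq_def)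

lemma smooth_expand:
  assumes "smooth_jet F"
  shows "smooth_jet (\<lambda>p. pdc TC F p + (\<Sum>j\<le>K. \<Sum>k\<in>UNIV. pdc (QC j k) F p * fst p (Suc j) $ k))"
  by (intro smooth_add smooth_pdc assms smooth_sum finite_atMost finite_UNIV smooth_mult smooth_coord) auto

lemma smooth_tdiff: "smooth_jet F \<Longrightarrow> depends_upto K F \<Longrightarrow> smooth_jet (tdiff F)"
proof -
  assume a: "smooth_jet F" "depends_upto K F"
  show ?thesis unfolding tdiff_expand[OF a(2)] by (rule smooth_expand[OF a(1)])
qed

lemma dep_tdiff: "depends_upto K F \<Longrightarrow> depends_upto (Suc K) (tdiff F)"
  unfolding tdiff_expand[of K F]
  apply (rule dep_add)
   apply (rule dep_mono[OF dep_pdc], assumption, simp)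
  apply (rule dep_sum, rule dep_sum, rule dep_mult)
   apply (rule dep_mono[OF dep_pdc], assumption, simp)
  apply (rule dep_coord, simp)
  done

lemma sum_Basis_inner: "e \<in> Basis \<Longrightarrow> (\<Sum>b\<in>Basis. f b *\<^sub>R b) \<bullet> e = f e"
  by (simp add: inner_sum_left inner_Basis if_distrib sum.delta cong: if_cong)

lemma vec_comp_sum1: "(\<Sum>b\<in>Basis. f b *\<^sub>R b :: real^'n) $ k = f (axis k 1)"
  by (subst cart_eq_inner_axis) (simp add: sum_Basis_inner axis_in_Basis_iff)

lemma vec_comp_sum2: "(\<Sum>b\<in>Basis. f b *\<^sub>R b :: real^'m^'n) $ i $ a = f (axis i (axis a 1))"
proof -
  have "(\<Sum>b\<in>Basis. f b *\<^sub>R b :: real^'m^'n) $ i $ a = (\<Sum>b\<in>Basis. f b *\<^sub>R b :: real^'m^'n) \<bullet> axis i (axis a 1)"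
    by (simp add: inner_axis)
  also have "\<dots> = f (axis i (axis a 1))"
    by (rule sum_Basis_inner) (simp add: axis_in_Basis_iff)
  finally show ?thesis .
qed

lemma inner_axis2: "(x::real^'m^'n) \<bullet> axis i (axis a 1) = x $ i $ a"
  by (simp add: inner_axis)

lemma tdiffE_comp1: "tdiffE V p $ k = tdiff (\<lambda>q. V q $ k) p"
  unfolding tdiffE_def vec_comp_sum1 by (simp add: inner_axis)

lemma tdiffE_comp2: "tdiffE (V :: _ \<Rightarrow> real^'m^'n) p $ i $ a = tdiff (\<lambda>q. V q $ i $ a) p"
  unfolding tdiffE_def vec_comp_sum2 inner_axis2 by simp

lemma pdcE_comp2: "pdcE c (V :: _ \<Rightarrow> real^'m^'n) p $ i $ a = pdc c (\<lambda>q. V q $ i $ a) p"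
  unfolding pdcE_def vec_comp_sum2 inner_axis2 by simp

lemma inner2: "(v::real^'m^'n) \<bullet> w = (\<Sum>i\<in>UNIV. \<Sum>a\<in>UNIV. v $ i $ a * w $ i $ a)"
  by (simp add: inner_vec_def)

lemma JT_comp: "JT X p w $ k = (\<Sum>i\<in>UNIV. \<Sum>a\<in>UNIV. w $ i $ a * pdc (QC 0 k) (\<lambda>q. X q $ i $ a) p)"
  by (simp add: JT_def inner2 pdcE_comp2)

lemma gradq_comp[simp]: "gradq j F p $ k = pdc (QC j k) F p"
  by (simp add: gradq_def)

lemma Oop_comp: "Oop r Y p $ k = pdc (QC r k) Y p - real (r + 1) * tdiff (\<lambda>q. pdc (QC (Suc r) k) Y q) p"
  by (simp add: Oop_def tdiffE_comp1)

abbreviation "zc q j k \<equiv> fst q j $ k"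

lemma tdiff_add:
  assumes "smooth_jet F" "smooth_jet G" "depends_upto K F" "depends_upto K G"
  shows "tdiff (\<lambda>q. F q + G q) p = tdiff F p + tdiff G p"
  unfolding tdiff_expand[OF dep_add[OF assms(3,4)]] tdiff_expand[OF assms(3)] tdiff_expand[OF assms(4)]
  using assms by (simp add: pdc_add smooth_Dc algebra_simps sum.distrib)

lemma tdiff_diff:
  assumes "smooth_jet F" "smooth_jet G" "depends_upto K F" "depends_upto K G"
  shows "tdiff (\<lambda>q. F q - G q) p = tdiff F p - tdiff G p"
  unfolding tdiff_expand[OF dep_diff[OF assms(3,4)]] tdiff_expand[OF assms(3)] tdiff_expand[OF assms(4)]
  using assms by (simp add: pdc_diff smooth_Dc algebra_simps sum_subtractf)

lemma tdiff_cmult: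
  assumes "smooth_jet F" "depends_upto K F"
  shows "tdiff (\<lambda>q. a * F q) p = a * tdiff F p"
  unfolding tdiff_expand[OF dep_cmult[OF assms(2)]] tdiff_expand[OF assms(2)]
  using assms by (simp add: pdc_cmult smooth_Dc algebra_simps sum_distrib_left)

lemma tdiff_mult:
  assumes "smooth_jet F" "smooth_jet G" "depends_upto K F" "depends_upto K G"
  shows "tdiff (\<lambda>q. F q * G q) p = tdiff F p * G p + F p * tdiff G p"
  unfolding tdiff_expand[OF dep_mult[OF assms(3,4)]] tdiff_expand[OF assms(3)] tdiff_expand[OF assms(4)]
  using assms by (simp add: pdc_mult smooth_Dc algebra_simps sum.distrib sum_distrib_left sum_distrib_right)

lemma tdiff_const: "tdiff (\<lambda>q. a) p = 0"
  unfolding tdiff_expand[OF dep_const[of 0]] by simp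

lemma tdiff_sum:
  assumes "finite A" "\<And>i. i \<in> A \<Longrightarrow> smooth_jet (f i)" "\<And>i. i \<in> A \<Longrightarrow> depends_upto K (f i)"
  shows "tdiff (\<lambda>q. \<Sum>i\<in>A. f i q) p = (\<Sum>i\<in>A. tdiff (f i) p)"
  using assms
proof (induction A rule: finite_induct)
  case empty then show ?case by (simp add: tdiff_const)
next
  case (insert x A)
  have "tdiff (\<lambda>q. \<Sum>i\<in>insert x A. f i q) p = tdiff (\<lambda>q. f x q + (\<Sum>i\<in>A. f i q)) p"
    using insert by simp
  also have "\<dots> = tdiff (f x) p + tdiff (\<lambda>q. \<Sum>i\<in>A. f i q) p"
    by (rule tdiff_add[of _ _ K]) (use insert in \<open>auto intro: smooth_sum dep_sum\<close>)
  finally show ?case using insert by simp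
qed

lemma delta_sum:
  fixes k :: "'l::finite"
  shows "(\<Sum>i\<le>K. \<Sum>k'\<in>UNIV. g i k' * (if Suc i = j \<and> k' = k then 1 else 0)) =
   (if j \<ge> 1 \<and> j - 1 \<le> K then g (j - 1) k else (0::real))"
proof -
  have "\<And>i. (\<Sum>k'\<in>UNIV. g i k' * (if Suc i = j \<and> k' = k then 1 else 0)) = (if Suc i = j then g i k else 0)"
    by (auto simp: if_distrib sum.delta cong: if_cong)
  then have "(\<Sum>i\<le>K. \<Sum>k'\<in>UNIV. g i k' * (if Suc i = j \<and> k' = k then 1 else 0)) =
     (\<Sum>i\<le>K. if Suc i = j then g i k else 0)" by simp
  also have "\<dots> = (if j \<ge> 1 \<and> j - 1 \<le> K then g (j - 1) k else 0)"
  proof (cases j)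
    case 0 then show ?thesis by simp
  next
    case (Suc j') then show ?thesis by (simp add: sum.delta')
  qed
  finally show ?thesis .
qed

lemma tdiff_comm:
  assumes sm: "smooth_jet F" and dep: "depends_upto K F"
  shows "pdc (QC j k) (tdiff F) p = tdiff (pdc (QC j k) F) p + (if j = 0 then 0 else pdc (QC (j - 1) k) F p)"
proof -
  define S where "S i k' q = pdc (QC i k') F q * zc q (Suc i) k'" for i k' q
  have smS: "smooth_jet (S i k')" for i k'
    unfolding S_def by (intro smooth_mult smooth_pdc sm smooth_coord)
  have e: "tdiff F = (\<lambda>q. pdc TC F q + (\<Sum>i\<le>K. \<Sum>k'\<in>UNIV. S i k' q))"
    unfolding S_def by (rule tdiff_expand[OF dep])
  have "pdc (QC j k) (tdiff F) p = pdc (QC j k) (pdc TC F) p + pdc (QC j k) (\<lambda>q. \<Sum>i\<le>K. \<Sum>k'\<in>UNIV. S i k' q) p"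
    unfolding e by (rule pdc_add) (auto intro!: smooth_Dc smooth_pdc sm smooth_sum smS)
  also have "pdc (QC j k) (\<lambda>q. \<Sum>i\<le>K. \<Sum>k'\<in>UNIV. S i k' q) p = (\<Sum>i\<le>K. \<Sum>k'\<in>UNIV. pdc (QC j k) (S i k') p)"
    apply (subst pdc_sum)
     apply (intro smooth_Dc smooth_sum smS finite_UNIV, simp)
    apply (rule sum.cong[OF refl])
    apply (subst pdc_sum)
     apply (intro smooth_Dc smS, simp)
    done
  also have "\<dots> = (\<Sum>i\<le>K. \<Sum>k'\<in>UNIV. pdc (QC i k') (pdc (QC j k) F) p * zc p (Suc i) k')
      + (\<Sum>i\<le>K. \<Sum>k'\<in>UNIV. pdc (QC i k') F p * (if Suc i = j \<and> k' = k then 1 else 0))"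
    unfolding S_def
    by (simp add: pdc_mult smooth_Dc smooth_pdc sm Dc_coord pdc_coord schwarz[OF sm, of "QC j k"]
        sum.distrib[symmetric])
  also have "(\<Sum>i\<le>K. \<Sum>k'\<in>UNIV. pdc (QC i k') F p * (if Suc i = j \<and> k' = k then 1 else 0)) =
     (if j = 0 then 0 else pdc (QC (j - 1) k) F p)"
    unfolding delta_sum using pdc_zero[OF dep, of "j - 1" k p] by auto
  finally show ?thesis
    unfolding tdiff_expand[OF dep_pdc[OF dep, of "QC j k"]]
    by (simp add: schwarz[OF sm, of "QC j k" TC])
qed

lemma tdiffE_zero: "tdiffE (\<lambda>q. 0 :: 'b::euclidean_space) p = 0"
  by (simp add: tdiffE_def tdiff_const)

lemma smooth_iter: "smooth_jet F \<Longrightarrow> depends_upto K F \<Longrightarrow> smooth_jet ((tdiff ^^ n) F) \<and> depends_upto (K + n) ((tdiff ^^ n) F)"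
  by (induction n) (auto intro: smooth_tdiff dep_tdiff[simplified])

lemma Oop_shift:
  assumes sm: "smooth_jet G" and dep: "depends_upto r G" and r: "r \<ge> 1"
  shows "Oop r (tdiff G) p = Oop (r - 1) G p"
proof -
  have z: "pdc (QC (Suc r) k) G = (\<lambda>q. 0)" for k using pdc_zero_fun[OF dep] by simp
  have a: "pdc (QC (Suc r) k) (tdiff G) = pdc (QC r k) G" for k
    using tdiff_comm[OF sm dep, of "Suc r" k] by (simp add: fun_eq_iff z tdiff_const)
  have b: "pdc (QC r k) (tdiff G) p = tdiff (pdc (QC r k) G) p + pdc (QC (r - 1) k) G p" for k
    using tdiff_comm[OF sm dep, of r k] r by simp
  show ?thesis
    unfolding vec_eq_iff Oop_comp
  proof
    fix k
    have "real (r + 1) = real (r - 1 + 1) + 1" using r by simp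
    moreover have "Suc (r - 1) = r" using r by simp
    ultimately show "pdc (QC r k) (tdiff G) p - real (r + 1) * tdiff (pdc (QC (Suc r) k) (tdiff G)) p =
      pdc (QC (r - 1) k) G p - real (r - 1 + 1) * tdiff (pdc (QC (Suc (r - 1)) k) G) p"
      unfolding a b by (simp add: algebra_simps)
  qed
qed

lemma Oop_iter:
  assumes sm: "smooth_jet F" and dep: "depends_upto (Suc k) F"
  shows "Oop (k + n) ((tdiff ^^ n) F) p = Oop k F p"
proof (induction n)
  case 0 then show ?case by simp
next
  case (Suc n)
  have "smooth_jet ((tdiff ^^ n) F)" "depends_upto (Suc k + n) ((tdiff ^^ n) F)"
    using smooth_iter[OF sm dep] by auto
  then have "Oop (k + Suc n) (tdiff ((tdiff ^^ n) F)) p = Oop (k + Suc n - 1) ((tdiff ^^ n) F) p"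
    by (intro Oop_shift) auto
  then show ?case using Suc by simp
qed

lemma Oop_add:
  assumes "smooth_jet A" "smooth_jet B" "depends_upto K A" "depends_upto K B"
  shows "Oop r (\<lambda>q. A q + B q) p = Oop r A p + Oop r B p"
  unfolding vec_eq_iff Oop_comp
proof
  fix k
  have e: "pdc (QC (Suc r) k) (\<lambda>q. A q + B q) = (\<lambda>q. pdc (QC (Suc r) k) A q + pdc (QC (Suc r) k) B q)"
    using assms by (simp add: fun_eq_iff pdc_add smooth_Dc)
  have "tdiff (pdc (QC (Suc r) k) (\<lambda>q. A q + B q)) p = tdiff (pdc (QC (Suc r) k) A) p + tdiff (pdc (QC (Suc r) k) B) p"
    unfolding e by (rule tdiff_add[of _ _ K]) (use assms in \<open>auto intro: smooth_pdc dep_pdc\<close>)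
  then show "pdc (QC r k) (\<lambda>q. A q + B q) p - real (r + 1) * tdiff (pdc (QC (Suc r) k) (\<lambda>q. A q + B q)) p =
    (Oop r A p + Oop r B p) $ k"
    using assms by (simp add: Oop_comp pdc_add smooth_Dc algebra_simps)
qed

lemma Oop_cmult:
  assumes "smooth_jet A" "depends_upto K A"
  shows "Oop r (\<lambda>q. c * A q) p = c *\<^sub>R Oop r A p"
  unfolding vec_eq_iff Oop_comp
proof
  fix k
  have e: "pdc (QC (Suc r) k) (\<lambda>q. c * A q) = (\<lambda>q. c * pdc (QC (Suc r) k) A q)"
    using assms by (simp add: fun_eq_iff pdc_cmult smooth_Dc)
  have "tdiff (pdc (QC (Suc r) k) (\<lambda>q. c * A q)) p = c * tdiff (pdc (QC (Suc r) k) A) p"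
    unfolding e by (rule tdiff_cmult[of _ K]) (use assms in \<open>auto intro: smooth_pdc dep_pdc\<close>)
  then show "pdc (QC r k) (\<lambda>q. c * A q) p - real (r + 1) * tdiff (pdc (QC (Suc r) k) (\<lambda>q. c * A q)) p =
    (c *\<^sub>R Oop r A p) $ k"
    using assms by (simp add: Oop_comp pdc_cmult smooth_Dc algebra_simps)
qed

lemma Oop_diff:
  assumes "smooth_jet A" "smooth_jet B" "depends_upto K A" "depends_upto K B"
  shows "Oop r (\<lambda>q. A q - B q) p = Oop r A p - Oop r B p"
proof -
  have e: "(\<lambda>q. A q - B q) = (\<lambda>q. A q + (-1) * B q)" by simp
  have 1: "Oop r (\<lambda>q. A q + (-1) * B q) p = Oop r A p + Oop r (\<lambda>q. (-1) * B q) p"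
    by (rule Oop_add[OF assms(1) smooth_cmult[OF assms(2)] assms(3) dep_cmult[OF assms(4)]])
  have 2: "Oop r (\<lambda>q. (-1) * B q) p = (-1) *\<^sub>R Oop r B p" by (rule Oop_cmult[OF assms(2,4)])
  show ?thesis unfolding e 1 2 by simp
qed

lemma pdc_add_s: "smooth_jet F \<Longrightarrow> smooth_jet G \<Longrightarrow> pdc c (\<lambda>q. F q + G q) p = pdc c F p + pdc c G p"
  by (simp add: pdc_add smooth_Dc)
lemma pdc_diff_s: "smooth_jet F \<Longrightarrow> smooth_jet G \<Longrightarrow> pdc c (\<lambda>q. F q - G q) p = pdc c F p - pdc c G p"
  by (simp add: pdc_diff smooth_Dc)
lemma pdc_mult_s: "smooth_jet F \<Longrightarrow> smooth_jet G \<Longrightarrow> pdc c (\<lambda>q. F q * G q) p = pdc c F p * G p + F p * pdc c G p"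
  by (simp add: pdc_mult smooth_Dc)
lemma pdc_cmult_s: "smooth_jet F \<Longrightarrow> pdc c (\<lambda>q. a * F q) p = a * pdc c F p"
  by (simp add: pdc_cmult smooth_Dc)
lemma pdc_sum_s: "(\<And>i. i \<in> A \<Longrightarrow> smooth_jet (f i)) \<Longrightarrow> pdc c (\<lambda>q. \<Sum>i\<in>A. f i q) p = (\<Sum>i\<in>A. pdc c (f i) p)"
  by (simp add: pdc_sum smooth_Dc)

lemmas pdc_s = pdc_add_s pdc_diff_s pdc_mult_s pdc_cmult_s pdc_sum_s
lemmas smooth_s = smooth_add smooth_diff smooth_mult smooth_cmult smooth_sum smooth_pdc smooth_const smooth_coord

lemma grad_iter:
  assumes sm: "smooth_jet G" and dep: "depends_upto 0 G"
  shows "pdc (QC n k) ((tdiff ^^ n) G) = pdc (QC 0 k) G"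
    and "pdc (QC n k) ((tdiff ^^ Suc n) G) = (\<lambda>q. real (Suc n) * tdiff (pdc (QC 0 k) G) q)"
proof -
  have it: "smooth_jet ((tdiff ^^ n) G) \<and> depends_upto n ((tdiff ^^ n) G)" for n
    using smooth_iter[OF sm dep, of n] by simp
  show a: "pdc (QC n k) ((tdiff ^^ n) G) = pdc (QC 0 k) G" for n
  proof (induction n)
    case 0 then show ?case by simp
  next
    case (Suc n)
    have z: "pdc (QC (Suc n) k) ((tdiff ^^ n) G) = (\<lambda>q. 0)"
      by (rule pdc_zero_fun[of n]) (use it in auto)
    show ?case
      using tdiff_comm[of "(tdiff ^^ n) G" n "Suc n" k] it Suc
      by (simp add: fun_eq_iff z tdiff_const)
  qed
  show "pdc (QC n k) ((tdiff ^^ Suc n) G) = (\<lambda>q. real (Suc n) * tdiff (pdc (QC 0 k) G) q)"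
  proof (induction n)
    case 0 then show ?case
      using tdiff_comm[OF sm dep, of 0 k] by (simp add: fun_eq_iff)
  next
    case (Suc n)
    have "pdc (QC (Suc n) k) ((tdiff ^^ Suc (Suc n)) G) q =
        tdiff (pdc (QC (Suc n) k) ((tdiff ^^ Suc n) G)) q + pdc (QC n k) ((tdiff ^^ Suc n) G) q" for q
    proof -
      have h: "smooth_jet ((tdiff ^^ Suc n) G)" "depends_upto (Suc n) ((tdiff ^^ Suc n) G)" using it by blast+
      show ?thesis using tdiff_comm[OF h, of "Suc n" k q] by simp
    qed
    then show ?case
    proof -
      assume eq: "\<And>q. pdc (QC (Suc n) k) ((tdiff ^^ Suc (Suc n)) G) q =
        tdiff (pdc (QC (Suc n) k) ((tdiff ^^ Suc n) G)) q + pdc (QC n k) ((tdiff ^^ Suc n) G) q"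
      show ?thesis
      proof (rule ext)
        fix q show "pdc (QC (Suc n) k) ((tdiff ^^ Suc (Suc n)) G) q = real (Suc (Suc n)) * tdiff (pdc (QC 0 k) G) q"
          unfolding eq Suc.IH a[of "Suc n"] by (simp add: algebra_simps)
      qed
    qed
  qed
qed

lemma L_part:
  fixes X :: "'i::finite \<Rightarrow> ('l::finite) jet \<Rightarrow> real" and w :: "'i \<Rightarrow> real"
  assumes smX: "\<And>b. smooth_jet (X b)" and depX: "\<And>b. depends_upto 0 (X b)"
    and smU: "smooth_jet U0" and depU: "depends_upto 0 U0"
  defines "Lf \<equiv> \<lambda>q. (1/2) * (\<Sum>b\<in>UNIV. w b * (tdiff (X b) q * tdiff (X b) q)) + U0 q"
  shows "pdc (QC 0 k) Lf p - tdiff (pdc (QC 1 k) Lf) p =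
    pdc (QC 0 k) U0 p - (\<Sum>b\<in>UNIV. w b * tdiff (tdiff (X b)) p * pdc (QC 0 k) (X b) p)"
proof -
  define V where "V b = tdiff (X b)" for b
  have smV: "smooth_jet (V b)" for b unfolding V_def using smooth_tdiff[OF smX depX] .
  have depV: "depends_upto (Suc 0) (V b)" for b unfolding V_def using dep_tdiff[OF depX] by simp
  have smP: "smooth_jet (pdc c (X b))" for b c using smooth_pdc[OF smX] .
  have depP: "depends_upto (Suc 0) (pdc c (X b))" for b c using dep_mono[OF dep_pdc[OF depX]] by simp
  have V0: "pdc (QC 0 k) (V b) p = tdiff (pdc (QC 0 k) (X b)) p" for b
    unfolding V_def using tdiff_comm[OF smX[of b] depX[of b], of 0 k p] by simp
  have V1: "pdc (QC 1 k) (V b) = pdc (QC 0 k) (X b)" for b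
    unfolding V_def using grad_iter(1)[OF smX[of b] depX[of b], of 1 k] by simp
  have U1: "pdc (QC 1 k) U0 = (\<lambda>q. 0)" using pdc_zero_fun[OF depU] by simp
  define S where "S q = (\<Sum>b\<in>UNIV. w b * (V b q * V b q))" for q
  have smVV: "smooth_jet (\<lambda>q. w b * (V b q * V b q))" for b by (intro smooth_cmult smooth_mult smV)
  have smS: "smooth_jet S" unfolding S_def by (rule smooth_sum) (auto intro: smVV)
  have Lf: "Lf = (\<lambda>q. (1/2) * S q + U0 q)"
    unfolding Lf_def V_def S_def ..
  have pL: "pdc c Lf q = (1/2) * (\<Sum>b\<in>UNIV. w b * (pdc c (V b) q * V b q + V b q * pdc c (V b) q)) + pdc c U0 q" for c q
  proof -
    have "pdc c Lf q = (1/2) * pdc c S q + pdc c U0 q"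
      unfolding Lf pdc_add_s[OF smooth_cmult[OF smS] smU] pdc_cmult_s[OF smS] ..
    moreover have "pdc c S q = (\<Sum>b\<in>UNIV. pdc c (\<lambda>q. w b * (V b q * V b q)) q)"
      unfolding S_def by (rule pdc_sum_s) (rule smVV)
    moreover have "pdc c (\<lambda>q. w b * (V b q * V b q)) q = w b * (pdc c (V b) q * V b q + V b q * pdc c (V b) q)" for b
      by (simp add: pdc_cmult_s[OF smooth_mult[OF smV smV]] pdc_mult_s[OF smV smV])
    ultimately show ?thesis by simp
  qed
  have e0: "pdc (QC 0 k) Lf p = (\<Sum>b\<in>UNIV. w b * (V b p * tdiff (pdc (QC 0 k) (X b)) p)) + pdc (QC 0 k) U0 p"
    unfolding pL V0 by (simp add: sum_distrib_left algebra_simps)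
  have e1: "pdc (QC 1 k) Lf = (\<lambda>q. \<Sum>b\<in>UNIV. w b * (V b q * pdc (QC 0 k) (X b) q))"
    unfolding pL[abs_def] V1 U1 by (simp add: sum_distrib_left algebra_simps)
  have t1: "tdiff (\<lambda>q. w b * (V b q * pdc (QC 0 k) (X b) q)) p =
      w b * (tdiff (V b) p * pdc (QC 0 k) (X b) p + V b p * tdiff (pdc (QC 0 k) (X b)) p)" for b
    using tdiff_cmult[OF smooth_mult[OF smV smP] dep_mult[OF depV depP]] tdiff_mult[OF smV smP depV depP] by simp
  have e2: "tdiff (pdc (QC 1 k) Lf) p = (\<Sum>b\<in>UNIV. w b * (tdiff (V b) p * pdc (QC 0 k) (X b) p + V b p * tdiff (pdc (QC 0 k) (X b)) p))"
    unfolding e1 t1[symmetric]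
    by (rule tdiff_sum[of _ _ "Suc 0"]) (simp_all add: smooth_cmult[OF smooth_mult[OF smV smP]] dep_cmult[OF dep_mult[OF depV depP]])
  show ?thesis unfolding e0 e2
    by (simp add: V_def algebra_simps sum.distrib sum_subtractf)
qed

lemma Oop_top:
  assumes "depends_upto r F"
  shows "Oop r F p = gradq r F p"
proof -
  have "gradq (Suc r) F = (\<lambda>q. 0)" using gradq_zero[OF assms] by (simp add: fun_eq_iff)
  then show ?thesis by (simp add: Oop_def tdiffE_zero)
qed

lemma gamma_part:
  fixes C :: "'l::finite \<Rightarrow> 'l jet \<Rightarrow> real"
  assumes smC: "\<And>k. smooth_jet (C k)" and depC: "\<And>k. depends_upto (\<rho> - 1) (C k)" and r: "\<rho> \<ge> 1"
  shows "Oop \<rho> (\<lambda>q. \<Sum>k'\<in>UNIV. C k' q * fst q \<rho> $ k') p $ k = C k p"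
proof -
  have dep: "depends_upto \<rho> (\<lambda>q. \<Sum>k'\<in>UNIV. C k' q * fst q \<rho> $ k')"
    by (intro dep_sum dep_mult dep_coord dep_mono[OF depC]) auto
  have z: "pdc (QC \<rho> k) (C k') p = 0" for k' by (rule pdc_zero[OF depC]) (use r in auto)
  have "pdc (QC \<rho> k) (\<lambda>q. \<Sum>k'\<in>UNIV. C k' q * fst q \<rho> $ k') p = (\<Sum>k'\<in>UNIV. pdc (QC \<rho> k) (\<lambda>q. C k' q * fst q \<rho> $ k') p)"
    by (rule pdc_sum_s) (intro smooth_mult smC smooth_coord)
  also have "\<dots> = (\<Sum>k'\<in>UNIV. C k' p * (if k' = k then 1 else 0))"
    by (rule sum.cong[OF refl]) (simp add: pdc_mult_s[OF smC smooth_coord] z pdc_coord)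
  also have "\<dots> = C k p" by (simp add: if_distrib sum.delta cong: if_cong)
  finally show ?thesis unfolding Oop_top[OF dep] by simp
qed

lemma UA_part:
  fixes X :: "'i::finite \<Rightarrow> ('l::finite) jet \<Rightarrow> real" and lam :: "'i \<Rightarrow> real"
  assumes smX: "\<And>b. smooth_jet (X b)" and depX: "\<And>b. depends_upto 0 (X b)" and h: "h \<ge> 1"
  defines "UAf \<equiv> \<lambda>q. (1/2) * (\<Sum>b\<in>UNIV. lam b * ((tdiff ^^ h) (X b) q * (tdiff ^^ h) (X b) q))"
  shows "pdc (QC (h - 1) k) UAf p - real h * tdiff (pdc (QC h k) UAf) p =
    - real h * (\<Sum>b\<in>UNIV. lam b * (tdiff ^^ Suc h) (X b) p * pdc (QC 0 k) (X b) p)"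
proof -
  define V where "V b = (tdiff ^^ h) (X b)" for b
  have itV: "smooth_jet (V b) \<and> depends_upto h (V b)" for b
    unfolding V_def using smooth_iter[OF smX[of b] depX[of b], of h] by simp
  have smV: "smooth_jet (V b)" for b using itV by blast
  have depV: "depends_upto h (V b)" for b using itV by blast
  have smP: "smooth_jet (pdc c (X b))" for b c using smooth_pdc[OF smX] .
  have depP: "depends_upto h (pdc c (X b))" for b c using dep_mono[OF dep_pdc[OF depX]] by simp
  have hh: "Suc (h - 1) = h" using h by simp
  have Vm: "pdc (QC (h - 1) k) (V b) = (\<lambda>q. real h * tdiff (pdc (QC 0 k) (X b)) q)" for b
    unfolding V_def using grad_iter(2)[OF smX[of b] depX[of b], of "h - 1" k] hh by simp
  have Vh: "pdc (QC h k) (V b) = pdc (QC 0 k) (X b)" for b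
    unfolding V_def using grad_iter(1)[OF smX[of b] depX[of b], of h k] by simp
  define S where "S q = (\<Sum>b\<in>UNIV. lam b * (V b q * V b q))" for q
  have smVV: "smooth_jet (\<lambda>q. lam b * (V b q * V b q))" for b by (intro smooth_cmult smooth_mult smV)
  have smS: "smooth_jet S" unfolding S_def by (rule smooth_sum) (auto intro: smVV)
  have UA: "UAf = (\<lambda>q. (1/2) * S q)"
    unfolding UAf_def V_def S_def ..
  have pL: "pdc c UAf q = (1/2) * (\<Sum>b\<in>UNIV. lam b * (pdc c (V b) q * V b q + V b q * pdc c (V b) q))" for c q
  proof -
    have "pdc c UAf q = (1/2) * pdc c S q"
      unfolding UA pdc_cmult_s[OF smS] ..
    moreover have "pdc c S q = (\<Sum>b\<in>UNIV. pdc c (\<lambda>q. lam b * (V b q * V b q)) q)"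
      unfolding S_def by (rule pdc_sum_s) (rule smVV)
    moreover have "pdc c (\<lambda>q. lam b * (V b q * V b q)) q = lam b * (pdc c (V b) q * V b q + V b q * pdc c (V b) q)" for b
      by (simp add: pdc_cmult_s[OF smooth_mult[OF smV smV]] pdc_mult_s[OF smV smV])
    ultimately show ?thesis by simp
  qed
  have e0: "pdc (QC (h - 1) k) UAf p = real h * (\<Sum>b\<in>UNIV. lam b * (V b p * tdiff (pdc (QC 0 k) (X b)) p))"
    unfolding pL Vm by (simp add: sum_distrib_left algebra_simps)
  have e1: "pdc (QC h k) UAf = (\<lambda>q. \<Sum>b\<in>UNIV. lam b * (V b q * pdc (QC 0 k) (X b) q))"
    unfolding pL[abs_def] Vh by (simp add: sum_distrib_left algebra_simps)
  have t1: "tdiff (\<lambda>q. lam b * (V b q * pdc (QC 0 k) (X b) q)) p =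
      lam b * (tdiff (V b) p * pdc (QC 0 k) (X b) p + V b p * tdiff (pdc (QC 0 k) (X b)) p)" for b
    using tdiff_cmult[OF smooth_mult[OF smV smP] dep_mult[OF depV depP]] tdiff_mult[OF smV smP depV depP] by simp
  have e2: "tdiff (pdc (QC h k) UAf) p = (\<Sum>b\<in>UNIV. lam b * (tdiff (V b) p * pdc (QC 0 k) (X b) p + V b p * tdiff (pdc (QC 0 k) (X b)) p))"
    unfolding e1 t1[symmetric]
    by (rule tdiff_sum[of _ _ h]) (simp_all add: smooth_cmult[OF smooth_mult[OF smV smP]] dep_cmult[OF dep_mult[OF depV depP]])
  have tV: "tdiff (V b) = (tdiff ^^ Suc h) (X b)" for b unfolding V_def by simp
  show ?thesis unfolding e0 e2 tV
    by (simp add: algebra_simps sum.distrib sum_distrib_left sum_subtractf sum_negf)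
qed

lemma Xd_comp: "((tdiffE ^^ n) (X :: _ \<Rightarrow> real^'m^'n)) p $ i $ a = (tdiff ^^ n) (\<lambda>q. X q $ i $ a) p"
proof (induction n arbitrary: p)
  case 0 then show ?case by simp
next
  case (Suc n)
  have "(\<lambda>q. (tdiffE ^^ n) X q $ i $ a) = (tdiff ^^ n) (\<lambda>q. X q $ i $ a)" using Suc by (simp add: fun_eq_iff)
  then show ?case by (simp add: tdiffE_comp2)
qed

lemma sum_pair: "(\<Sum>i\<in>(UNIV::'n::finite set). \<Sum>a\<in>(UNIV::'m::finite set). f i a) = (\<Sum>b\<in>UNIV. f (fst b) (snd b))"
  by (subst sum.cartesian_product) (simp add: case_prod_beta)

lemma inner_pair: "(v::real^'m^'n) \<bullet> w = (\<Sum>b\<in>UNIV. v $ fst b $ snd b * w $ fst b $ snd b)"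
  unfolding inner2 by (rule sum_pair)

lemma JT_pair: "JT X p w $ k = (\<Sum>b\<in>UNIV. w $ fst b $ snd b * pdc (QC 0 k) (\<lambda>q. X q $ fst b $ snd b) p)"
  unfolding JT_comp by (rule sum_pair)

lemma JT_add: "JT X p (u + v) = JT X p u + JT X p v"
  by (simp add: JT_def vec_eq_iff inner_add_left)

lemma JT_diff: "JT X p (u - v) = JT X p u - JT X p v"
  by (simp add: JT_def vec_eq_iff inner_diff_left)

lemma dep_comp_vec: "depends_upto K (V :: _ \<Rightarrow> real^'m^'n) \<Longrightarrow> depends_upto K (\<lambda>q. V q $ i $ a)"
  using dep_comp2[of K V V "\<lambda>x y. x $ i $ a"] by simp

theorem proposition1p5:
  fixes X :: "('l::finite) jet \<Rightarrow> real^3^'N"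
    and m :: "'N \<Rightarrow> real"
    and U0 US R :: "'l jet \<Rightarrow> real"
    and F0 FS FR G :: "'l jet \<Rightarrow> real^3^'N"
    and lam :: "'N \<Rightarrow> 3 \<Rightarrow> real"
    and s h \<sigma> \<rho> :: nat
  assumes X_dep: "depends_upto 0 X"
    and X_smooth: "\<And>i a. smooth_jet (\<lambda>p. X p $ i $ a)"
    and m_pos: "\<And>i. m i > 0"
    and U0_dep: "depends_upto 0 U0" and U0_smooth: "smooth_jet U0"
    and F0_hyp: "\<And>p. JT X p (F0 p) = gradq 0 U0 p"
    and US_dep: "depends_upto (Suc s) US" and US_smooth: "smooth_jet US"
    and FS_hyp: "\<And>p. JT X p (FS p) = Oop s US p"
    and h_ge: "h \<ge> 1"
    and lam_pos: "\<And>i a. lam i a > 0"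
    and \<sigma>_ge: "\<sigma> \<ge> 1"
    and R_dep: "depends_upto \<sigma> R" and R_smooth: "smooth_jet R"
    and FR_hyp: "\<And>p. JT X p (FR p) = - gradq \<sigma> R p"
    and \<rho>_ge: "\<rho> \<ge> 1"
    and G_dep: "depends_upto (\<rho> - 1) G"
    and G_smooth: "\<And>i a. smooth_jet (\<lambda>p. G p $ i $ a)"
  shows
    "let Lmat = (\<lambda>v :: real^3^'N. \<chi> i. \<chi> a. lam i a * v $ i $ a);
         Xd = (\<lambda>n. (tdiffE ^^ n) X);
         FA = (\<lambda>p. Lmat (Xd (h + 1) p));
         UA = (\<lambda>p. (1/2) * (Lmat (Xd h p) \<bullet> Xd h p));
         \<gamma> = (\<lambda>p. JT X p (G p) \<bullet> fst p \<rho>);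
         Q = (\<lambda>p. \<chi> i. m i *\<^sub>R (Xd 1 p $ i));
         Qdot = tdiffE Q;
         L = (\<lambda>p. (1/2) * (Q p \<bullet> Xd 1 p) + U0 p);
         F = (\<lambda>p. F0 p + FS p + FA p + FR p + G p);
         r = max (max s (h - 1)) (max \<sigma> \<rho>);
         Y = (\<lambda>p. (tdiff ^^ r) L p + (tdiff ^^ (r - s)) US p
                 - (1 / real h) * (tdiff ^^ (r - (h - 1))) UA p
                 - (tdiff ^^ (r - \<sigma>)) R p + (tdiff ^^ (r - \<rho>)) \<gamma> p)
     in (\<forall>p. Oop r Y p = JT X p (F p - Qdot p)) \<and>
        (\<forall>p. JT X p (Qdot p) = JT X p (F p) \<longleftrightarrow>
             gradq r Y p - real (r + 1) *\<^sub>R tdiffE (gradq (Suc r) Y) p = 0)"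
proof -
  define Lmat where "Lmat = (\<lambda>v :: real^3^'N. \<chi> i. \<chi> a. lam i a * v $ i $ a)"
  define Xd where "Xd = (\<lambda>n. (tdiffE ^^ n) X)"
  define FA where "FA = (\<lambda>p. Lmat (Xd (h + 1) p))"
  define UA where "UA = (\<lambda>p. (1/2) * (Lmat (Xd h p) \<bullet> Xd h p))"
  define \<gamma> where "\<gamma> = (\<lambda>p. JT X p (G p) \<bullet> fst p \<rho>)"
  define Q where "Q = (\<lambda>p. \<chi> i. m i *\<^sub>R (Xd 1 p $ i))"
  define Qdot where "Qdot = tdiffE Q"
  define L where "L = (\<lambda>p. (1/2) * (Q p \<bullet> Xd 1 p) + U0 p)"
  define F where "F = (\<lambda>p. F0 p + FS p + FA p + FR p + G p)"
  define r where "r = max (max s (h - 1)) (max \<sigma> \<rho>)"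
  define Y where "Y = (\<lambda>p. (tdiff ^^ r) L p + (tdiff ^^ (r - s)) US p
                 - (1 / real h) * (tdiff ^^ (r - (h - 1))) UA p
                 - (tdiff ^^ (r - \<sigma>)) R p + (tdiff ^^ (r - \<rho>)) \<gamma> p)"
  have main: "\<forall>p. Oop r Y p = JT X p (F p - Qdot p)"
  proof
    fix p
    define Xb where "Xb b = (\<lambda>q. X q $ fst b $ snd b)" for b :: "'N \<times> 3"
    have smXb: "smooth_jet (Xb b)" for b unfolding Xb_def by (rule X_smooth)
    have depXb: "depends_upto 0 (Xb b)" for b unfolding Xb_def by (rule dep_comp_vec[OF X_dep])
    have Xdc: "Xd n q $ i $ a = (tdiff ^^ n) (Xb (i, a)) q" for n q i a
      unfolding Xd_def Xb_def Xd_comp by simp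
    have smT: "smooth_jet (tdiff (Xb b))" for b using smooth_tdiff[OF smXb depXb] .
    have depT: "depends_upto (Suc 0) (tdiff (Xb b))" for b using dep_tdiff[OF depXb] by simp
    have Xd1: "Xd 1 q $ i $ a = tdiff (Xb (i,a)) q" for q i a using Xdc[of 1] by simp
    have Xd1': "Xd (Suc 0) q $ i $ a = tdiff (Xb (i,a)) q" for q i a using Xd1 by simp
    have Qc: "Q q $ i $ a = m i * tdiff (Xb (i,a)) q" for q i a by (simp add: Q_def Xd1')
    define Lf where "Lf = (\<lambda>q. (1/2) * (\<Sum>b\<in>UNIV. m (fst b) * (tdiff (Xb b) q * tdiff (Xb b) q)) + U0 q)"
    have LL: "L = Lf"
      unfolding L_def Lf_def inner_pair by (simp add: Qc Xd1 Xd1' mult.assoc)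
    have smL: "smooth_jet L" unfolding LL Lf_def
      by (intro smooth_add smooth_cmult smooth_sum smooth_mult smT U0_smooth) auto
    have depL: "depends_upto (Suc 0) L" unfolding LL Lf_def
      by (intro dep_add dep_cmult dep_sum dep_mult depT dep_mono[OF U0_dep]) auto
    have smXh: "smooth_jet ((tdiff ^^ h) (Xb b))" for b using smooth_iter[OF smXb depXb, of h] by blast
    have depXh: "depends_upto h ((tdiff ^^ h) (Xb b))" for b using smooth_iter[OF smXb depXb, of h] by simp
    have UAe: "UA = (\<lambda>q. (1/2) * (\<Sum>b\<in>UNIV. (\<lambda>b. lam (fst b) (snd b)) b * ((tdiff ^^ h) (Xb b) q * (tdiff ^^ h) (Xb b) q)))"
      unfolding UA_def inner_pair by (simp add: Lmat_def Xdc mult.assoc)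
    have smUA: "smooth_jet UA" unfolding UAe
      by (intro smooth_cmult smooth_sum smooth_mult smXh) auto
    have depUA: "depends_upto (Suc (h - 1)) UA" unfolding UAe using h_ge
      by (intro dep_cmult dep_sum dep_mult depXh[THEN dep_mono]) auto
    define C where "C k q = (\<Sum>b\<in>UNIV. G q $ fst b $ snd b * pdc (QC 0 k) (Xb b) q)" for k q
    have \<gamma>e: "\<gamma> = (\<lambda>q. \<Sum>k'\<in>UNIV. C k' q * fst q \<rho> $ k')"
      unfolding \<gamma>_def C_def by (simp add: inner_vec_def JT_pair Xb_def)
    have smC: "smooth_jet (C k)" for k unfolding C_def
      by (intro smooth_sum smooth_mult G_smooth smooth_pdc smXb) auto
    have depC: "depends_upto (\<rho> - 1) (C k)" for k unfolding C_def
      by (intro dep_sum dep_mult dep_comp_vec[OF G_dep] dep_mono[OF dep_pdc[OF depXb]]) auto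
    have sm\<gamma>: "smooth_jet \<gamma>" unfolding \<gamma>e by (intro smooth_sum smooth_mult smC smooth_coord) auto
    have dep\<gamma>: "depends_upto \<rho> \<gamma>" unfolding \<gamma>e
      by (intro dep_sum dep_mult dep_coord depC[THEN dep_mono]) auto
    define T1 where "T1 = (tdiff ^^ r) L"
    define T2 where "T2 = (tdiff ^^ (r - s)) US"
    define T3 where "T3 = (tdiff ^^ (r - (h - 1))) UA"
    define T4 where "T4 = (tdiff ^^ (r - \<sigma>)) R"
    define T5 where "T5 = (tdiff ^^ (r - \<rho>)) \<gamma>"
    have rs: "s \<le> r" "h - 1 \<le> r" "\<sigma> \<le> r" "\<rho> \<le> r" by (auto simp: r_def)
    have i1: "smooth_jet T1 \<and> depends_upto (Suc r) T1"
      unfolding T1_def using smooth_iter[OF smL depL, of r] by simp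
    have i2: "smooth_jet T2 \<and> depends_upto (Suc r) T2"
      unfolding T2_def using smooth_iter[OF US_smooth US_dep, of "r - s"] rs by simp
    have i3: "smooth_jet T3 \<and> depends_upto (Suc r) T3"
      unfolding T3_def using smooth_iter[OF smUA depUA, of "r - (h - 1)"] rs h_ge by simp
    have i4: "smooth_jet T4 \<and> depends_upto (Suc r) T4"
      unfolding T4_def using smooth_iter[OF R_smooth R_dep, of "r - \<sigma>"] rs by (auto elim: dep_mono)
    have i5: "smooth_jet T5 \<and> depends_upto (Suc r) T5"
      unfolding T5_def using smooth_iter[OF sm\<gamma> dep\<gamma>, of "r - \<rho>"] rs by (auto elim: dep_mono)
    have Ye: "Y = (\<lambda>q. T1 q + T2 q - (1 / real h) * T3 q - T4 q + T5 q)"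
      unfolding Y_def T1_def T2_def T3_def T4_def T5_def ..
    have OY: "Oop r Y p = Oop r T1 p + Oop r T2 p - (1 / real h) *\<^sub>R Oop r T3 p - Oop r T4 p + Oop r T5 p"
    proof -
      have a1: "smooth_jet (\<lambda>q. T1 q + T2 q)" "depends_upto (Suc r) (\<lambda>q. T1 q + T2 q)"
        using i1 i2 by (auto intro: smooth_add dep_add)
      have a2: "smooth_jet (\<lambda>q. T1 q + T2 q - (1 / real h) * T3 q)" "depends_upto (Suc r) (\<lambda>q. T1 q + T2 q - (1 / real h) * T3 q)"
        using smooth_diff[OF a1(1) smooth_cmult[OF conjunct1[OF i3]]] dep_diff[OF a1(2) dep_cmult[OF conjunct2[OF i3]]] by blast+
      have a3: "smooth_jet (\<lambda>q. T1 q + T2 q - (1 / real h) * T3 q - T4 q)" "depends_upto (Suc r) (\<lambda>q. T1 q + T2 q - (1 / real h) * T3 q - T4 q)"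
        using a2 i4 by (auto intro: smooth_diff dep_diff)
      have "Oop r Y p = Oop r (\<lambda>q. T1 q + T2 q - (1 / real h) * T3 q - T4 q) p + Oop r T5 p"
        unfolding Ye using a3 i5 by (intro Oop_add) auto
      also have "Oop r (\<lambda>q. T1 q + T2 q - (1 / real h) * T3 q - T4 q) p = Oop r (\<lambda>q. T1 q + T2 q - (1 / real h) * T3 q) p - Oop r T4 p"
        using a2 i4 by (intro Oop_diff) auto
      also have "Oop r (\<lambda>q. T1 q + T2 q - (1 / real h) * T3 q) p = Oop r (\<lambda>q. T1 q + T2 q) p - Oop r (\<lambda>q. (1 / real h) * T3 q) p"
        by (rule Oop_diff[OF a1(1) smooth_cmult[OF conjunct1[OF i3]] a1(2) dep_cmult[OF conjunct2[OF i3]]])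
      also have "Oop r (\<lambda>q. (1 / real h) * T3 q) p = (1 / real h) *\<^sub>R Oop r T3 p"
        using i3 by (intro Oop_cmult) auto
      also have "Oop r (\<lambda>q. T1 q + T2 q) p = Oop r T1 p + Oop r T2 p"
        using i1 i2 by (intro Oop_add) auto
      finally show ?thesis .
    qed
    have O1: "Oop r T1 p = Oop 0 L p" unfolding T1_def using Oop_iter[OF smL depL, of r p] by simp
    have O2: "Oop r T2 p = Oop s US p" unfolding T2_def using Oop_iter[OF US_smooth US_dep, of "r - s" p] rs by simp
    have O3: "Oop r T3 p = Oop (h - 1) UA p" unfolding T3_def using Oop_iter[OF smUA depUA, of "r - (h - 1)" p] rs by simp
    have O4: "Oop r T4 p = gradq \<sigma> R p" unfolding T4_def
      using Oop_iter[OF R_smooth dep_mono[OF R_dep, of "Suc \<sigma>"], of "r - \<sigma>" p] rs Oop_top[OF R_dep] by simp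
    have O5: "Oop r T5 p = Oop \<rho> \<gamma> p" unfolding T5_def
      using Oop_iter[OF sm\<gamma> dep_mono[OF dep\<gamma>, of "Suc \<rho>"], of "r - \<rho>" p] rs by simp
    show "Oop r Y p = JT X p (F p - Qdot p)"
    proof (rule vec_eq_iff[THEN iffD2], rule allI)
      fix k
      define SQ where "SQ = (\<Sum>b\<in>UNIV. m (fst b) * tdiff (tdiff (Xb b)) p * pdc (QC 0 k) (Xb b) p)"
      define SA where "SA = (\<Sum>b\<in>UNIV. lam (fst b) (snd b) * (tdiff ^^ Suc h) (Xb b) p * pdc (QC 0 k) (Xb b) p)"
      have c1: "Oop 0 L p $ k = pdc (QC 0 k) U0 p - SQ"
        using L_part[OF smXb depXb U0_smooth U0_dep, where w="\<lambda>b. m (fst b)" and k=k and p=p]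
        unfolding Oop_comp LL Lf_def SQ_def by simp
      have hh: "Suc (h - 1) = h" "real (h - 1 + 1) = real h" using h_ge by auto
      have c3: "Oop (h - 1) UA p $ k = - real h * SA"
        using UA_part[OF smXb depXb h_ge, where lam="\<lambda>b. lam (fst b) (snd b)" and k=k and p=p]
        unfolding Oop_comp UAe SA_def hh by simp
      have c5: "Oop \<rho> \<gamma> p $ k = C k p"
        unfolding \<gamma>e by (rule gamma_part[OF smC depC \<rho>_ge])
      have r0: "JT X p (F0 p) $ k = pdc (QC 0 k) U0 p" using F0_hyp by simp
      have rA: "JT X p (FA p) $ k = SA"
        unfolding JT_pair FA_def SA_def Xb_def[symmetric]
        by (simp add: Lmat_def Xdc)
      have rG: "JT X p (G p) $ k = C k p"
        unfolding JT_pair C_def Xb_def[symmetric] by (simp add: mult.commute)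
      have Qfun: "(\<lambda>q. Q q $ i $ a) = (\<lambda>q. m i * tdiff (Xb (i,a)) q)" for i a
        by (simp add: fun_eq_iff Qc)
      have Qd: "Qdot p $ i $ a = m i * tdiff (tdiff (Xb (i,a))) p" for i a
        unfolding Qdot_def tdiffE_comp2 Qfun by (rule tdiff_cmult[OF smT depT])
      have rQ: "JT X p (Qdot p) $ k = SQ"
        unfolding JT_pair SQ_def Xb_def[symmetric] by (simp add: Qd)
      have lhs: "Oop r Y p $ k = (pdc (QC 0 k) U0 p - SQ) + JT X p (FS p) $ k - (1 / real h) * (- real h * SA)
           - gradq \<sigma> R p $ k + C k p"
        unfolding OY O1 O2 O3 O4 O5 using c1 c3 c5 FS_hyp by simp
      have rhs: "JT X p (F p - Qdot p) $ k = pdc (QC 0 k) U0 p + JT X p (FS p) $ k + SA + JT X p (FR p) $ k + C k p - SQ"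
        unfolding F_def JT_diff JT_add using r0 rA rG rQ by simp
      have "JT X p (FR p) $ k = - gradq \<sigma> R p $ k" using FR_hyp by simp
      moreover have "real h \<noteq> 0" using h_ge by simp
      ultimately show "Oop r Y p $ k = JT X p (F p - Qdot p) $ k"
        unfolding lhs rhs by (simp add: field_simps)
    qed
  qed
  have eq: "?thesis \<longleftrightarrow> ((\<forall>p. Oop r Y p = JT X p (F p - Qdot p)) \<and>
        (\<forall>p. JT X p (Qdot p) = JT X p (F p) \<longleftrightarrow>
             gradq r Y p - real (r + 1) *\<^sub>R tdiffE (gradq (Suc r) Y) p = 0))"
    unfolding Let_def Lmat_def Xd_def FA_def UA_def \<gamma>_def Q_def Qdot_def L_def F_def r_def Y_def
    by (rule refl)
  show ?thesis unfolding eq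
  proof (intro conjI allI)
    fix p
    show "Oop r Y p = JT X p (F p - Qdot p)" using main by blast
    show "JT X p (Qdot p) = JT X p (F p) \<longleftrightarrow>
             gradq r Y p - real (r + 1) *\<^sub>R tdiffE (gradq (Suc r) Y) p = 0"
    proof -
      have d: "gradq r Y p - real (r + 1) *\<^sub>R tdiffE (gradq (Suc r) Y) p = JT X p (F p) - JT X p (Qdot p)"
        using main[rule_format, of p] unfolding Oop_def JT_diff .
      show ?thesis unfolding d right_minus_eq by (rule eq_commute)
    qed
  qed
qed

end
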